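(* Let $\lambda\in(0,r^\alpha)$. For a finite set $E\subset K$ with $\#E\ge2$, if $R(\xi,\eta)>0$ for all distinct $\xi,\eta\in E$, then $R(\xi,E\setminus\{\xi\})>0$ for all $\xi\in E$.
   Context: Let $\{S_i\}_{i=1}^N$ ($N\ge2$) be contractive similitudes of $\mathbb R^d$ with ratios $r_i\in(0,1)$ satisfying the open set condition; $K$ the self-similar set, $\alpha$ its Hausdorff dimension, $r=\min r_i$. $\Sigma^*$ finite words with empty word $\vartheta$, $S_{\mathbf x}$, $r_{\mathbf x}$ compositions/products. $\mathcal J_0=\{\vartheta\}$, $\mathcal J_n=\{i_1\cdots i_k:r_{i_1\cdots i_k}\le r^n<r_{i_1\cdots i_{k-1}}\}$, $X_n=\bigcup_{k\le n}\mathcal J_k$, $|\mathbf x|=n$ on $\mathcal J_n$, parent $\mathbf x^-$ the prefix in $\mathcal J_{n-1}$. Edges: $\{\mathbf x,\mathbf x^-\}$ and horizontal $\{\mathbf x,\mathbf y\}$ ($\mathbf x\ne\mathbf y\in\mathcal J_n$, $\inf_{\xi,\eta\in K}|S_{\mathbf x}(\xi)-S_{\mathbf y}(\eta)|\le\gamma r^n$). Conductances of the $\lambda$-natural random walk: $c(\mathbf x,\mathbf x^-)=r_{\mathbf x}^\alpha\lambda^{-|\mathbf x|}$, $c(\mathbf x,\mathbf y)=r^{\alpha|\mathbf x|}\lambda^{-|\mathbf x|}$ on horizontal edges, zero otherwise; $\mathcal E_{X_n}[f]=\frac12\sum_{\mathbf x,\mathbf y\in X_n}c(\mathbf x,\mathbf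 y)(f(\mathbf x)-f(\mathbf y))^2$. Effective resistance $R_{X_n}(A,B)=(\min\{\mathcal E_{X_n}[f]:f=1$ on $A$, $0$ on $B\})^{-1}$, $0$ if $A\cap B\ne\emptyset$. For a $\kappa$-sequence (maps $\kappa_n:K\to\mathcal J_n$ with $\kappa_n(\xi)$ a prefix of $\kappa_{n+1}(\xi)$ and $\xi\in S_{\kappa_n(\xi)}(K)$ for all $n$), the limiting resistance of closed $\Phi,\Psi\subset K$ is $R(\Phi,\Psi)=\lim_nR_{X_n}(\kappa_n(\Phi),\kappa_n(\Psi))$ (exists, independent of the $\kappa$-sequence); points are identified with singletons. *)

theory Defs
  imports "HOL-Analysis.Analysis" "HOL-Library.Sublist"
begin

definition hausdorff_content :: "real \<Rightarrow> real \<Rightarrow> 'a::metric_space set \<Rightarrow> ennreal" where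
  "hausdorff_content s \<delta> A =
     (INF U \<in> {U :: nat \<Rightarrow> 'a set. A \<subseteq> (\<Union>i. U i) \<and> (\<forall>i. bounded (U i) \<and> diameter (U i) \<le> \<delta>)}.
        (\<Sum>i. ennreal (diameter (U i) powr s)))"

definition hausdorff_measure :: "real \<Rightarrow> 'a::metric_space set \<Rightarrow> ennreal" where
  "hausdorff_measure s A = (SUP \<delta> \<in> {0<..}. hausdorff_content s \<delta> A)"

definition hausdorff_dim :: "'a::metric_space set \<Rightarrow> real" where
  "hausdorff_dim A = Inf {s. 0 \<le> s \<and> hausdorff_measure s A = 0}"

definition similitude :: "('a::euclidean_space \<Rightarrow> 'a) \<Rightarrow> real \<Rightarrow> bool" where
  "similitude f c \<longleftrightarrow> (\<forall>x y. dist (f x) (f y) = c * dist x y)"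

definition open_set_condition :: "nat \<Rightarrow> (nat \<Rightarrow> 'a::euclidean_space \<Rightarrow> 'a) \<Rightarrow> bool" where
  "open_set_condition N S \<longleftrightarrow>
     (\<exists>V. open V \<and> V \<noteq> {} \<and> (\<forall>i\<in>{1..N}. S i ` V \<subseteq> V) \<and>
          (\<forall>i\<in>{1..N}. \<forall>j\<in>{1..N}. i \<noteq> j \<longrightarrow> S i ` V \<inter> S j ` V = {}))"

definition self_similar_set :: "nat \<Rightarrow> (nat \<Rightarrow> 'a::euclidean_space \<Rightarrow> 'a) \<Rightarrow> 'a set \<Rightarrow> bool" where
  "self_similar_set N S K \<longleftrightarrow> compact K \<and> K \<noteq> {} \<and> K = (\<Union>i\<in>{1..N}. S i ` K)"

definition rmin :: "nat \<Rightarrow> (nat \<Rightarrow> real) \<Rightarrow> real" where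
  "rmin N r = Min (r ` {1..N})"

definition wS :: "(nat \<Rightarrow> 'a \<Rightarrow> 'a) \<Rightarrow> nat list \<Rightarrow> 'a \<Rightarrow> 'a" where
  "wS S w = foldr (\<lambda>i g. S i \<circ> g) w id"

definition wr :: "(nat \<Rightarrow> real) \<Rightarrow> nat list \<Rightarrow> real" where
  "wr r w = prod_list (map r w)"

definition words :: "nat \<Rightarrow> nat list set" where
  "words N = {w. set w \<subseteq> {1..N}}"

definition J :: "nat \<Rightarrow> (nat \<Rightarrow> real) \<Rightarrow> nat \<Rightarrow> nat list set" where
  "J N r n = (if n = 0 then {[]} else
     {w \<in> words N. w \<noteq> [] \<and> wr r w \<le> rmin N r ^ n \<and> rmin N r ^ n < wr r (butlast w)})"

definition X :: "nat \<Rightarrow> (nat \<Rightarrow> real) \<Rightarrow> nat \<Rightarrow> nat list set" where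
  "X N r n = (\<Union>k\<le>n. J N r k)"

text \<open>|x| = n for x in J_n (the J_n are pairwise disjoint).\<close>
definition lvl :: "nat \<Rightarrow> (nat \<Rightarrow> real) \<Rightarrow> nat list \<Rightarrow> nat" where
  "lvl N r w = (THE k. w \<in> J N r k)"

definition vert_edge :: "nat \<Rightarrow> (nat \<Rightarrow> real) \<Rightarrow> nat list \<Rightarrow> nat list \<Rightarrow> bool" where
  "vert_edge N r w v \<longleftrightarrow> (\<exists>k\<ge>1. w \<in> J N r k \<and> v \<in> J N r (k - 1) \<and> prefix v w)"

definition horiz_edge :: "nat \<Rightarrow> (nat \<Rightarrow> 'a::euclidean_space \<Rightarrow> 'a) \<Rightarrow> (nat \<Rightarrow> real) \<Rightarrow> 'a set \<Rightarrow> real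
    \<Rightarrow> nat list \<Rightarrow> nat list \<Rightarrow> bool" where
  "horiz_edge N S r K \<gamma> w v \<longleftrightarrow>
     (\<exists>k. w \<in> J N r k \<and> v \<in> J N r k \<and> w \<noteq> v \<and>
          (INF p \<in> K \<times> K. dist (wS S w (fst p)) (wS S v (snd p))) \<le> \<gamma> * rmin N r ^ k)"

definition cond :: "nat \<Rightarrow> (nat \<Rightarrow> 'a::euclidean_space \<Rightarrow> 'a) \<Rightarrow> (nat \<Rightarrow> real) \<Rightarrow> 'a set \<Rightarrow> real
    \<Rightarrow> real \<Rightarrow> real \<Rightarrow> nat list \<Rightarrow> nat list \<Rightarrow> real" where
  "cond N S r K \<gamma> \<alpha> lam w v =
     (if vert_edge N r w v then wr r w powr \<alpha> * inverse (lam ^ lvl N r w)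
      else if vert_edge N r v w then wr r v powr \<alpha> * inverse (lam ^ lvl N r v)
      else if horiz_edge N S r K \<gamma> w v
        then (rmin N r ^ lvl N r w) powr \<alpha> * inverse (lam ^ lvl N r w)
      else 0)"

definition energy :: "nat \<Rightarrow> (nat \<Rightarrow> 'a::euclidean_space \<Rightarrow> 'a) \<Rightarrow> (nat \<Rightarrow> real) \<Rightarrow> 'a set \<Rightarrow> real
    \<Rightarrow> real \<Rightarrow> real \<Rightarrow> nat \<Rightarrow> (nat list \<Rightarrow> real) \<Rightarrow> real" where
  "energy N S r K \<gamma> \<alpha> lam n f =
     1/2 * (\<Sum>x\<in>X N r n. \<Sum>y\<in>X N r n. cond N S r K \<gamma> \<alpha> lam x y * (f x - f y)^2)"

definition eff_res :: "nat \<Rightarrow> (nat \<Rightarrow> 'a::euclidean_space \<Rightarrow> 'a) \<Rightarrow> (nat \<Rightarrow> real) \<Rightarrow> 'a set \<Rightarrow> real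
    \<Rightarrow> real \<Rightarrow> real \<Rightarrow> nat \<Rightarrow> nat list set \<Rightarrow> nat list set \<Rightarrow> real" where
  "eff_res N S r K \<gamma> \<alpha> lam n A B =
     (if A \<inter> B \<noteq> {} then 0 else
        inverse (Inf {energy N S r K \<gamma> \<alpha> lam n f | f.
                        (\<forall>x\<in>A. f x = 1) \<and> (\<forall>x\<in>B. f x = 0)}))"

definition kappa_seq :: "nat \<Rightarrow> (nat \<Rightarrow> 'a::euclidean_space \<Rightarrow> 'a) \<Rightarrow> (nat \<Rightarrow> real) \<Rightarrow> 'a set
    \<Rightarrow> (nat \<Rightarrow> 'a \<Rightarrow> nat list) \<Rightarrow> bool" where
  "kappa_seq N S r K \<kappa> \<longleftrightarrow>
     (\<forall>\<xi>\<in>K. \<forall>n. \<kappa> n \<xi> \<in> J N r n \<and> prefix (\<kappa> n \<xi>) (\<kappa> (Suc n) \<xi>) \<and> \<xi> \<in> wS S (\<kappa> n \<xi>) ` K)"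

definition lim_res :: "nat \<Rightarrow> (nat \<Rightarrow> 'a::euclidean_space \<Rightarrow> 'a) \<Rightarrow> (nat \<Rightarrow> real) \<Rightarrow> 'a set
    \<Rightarrow> real \<Rightarrow> real \<Rightarrow> real \<Rightarrow> (nat \<Rightarrow> 'a \<Rightarrow> nat list) \<Rightarrow> 'a set \<Rightarrow> 'a set \<Rightarrow> ereal" where
  "lim_res N S r K \<gamma> \<alpha> lam \<kappa> \<Phi> \<Psi> =
     lim (\<lambda>n. ereal (eff_res N S r K \<gamma> \<alpha> lam n (\<kappa> n ` \<Phi>) (\<kappa> n ` \<Psi>)))"

end

theory Submission
  imports Defs
begin

lemma conv_aux:
  fixes \<rho> :: "nat \<Rightarrow> real"
  assumes "\<And>n. 0 \<le> \<rho> n" "\<And>n. \<rho> (Suc n) \<le> \<rho> n + D * s^n" "0 \<le> s" "s < 1" "0 \<le> D"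
  shows "\<exists>L. \<rho> \<longlonglongrightarrow> L"
proof -
  define \<sigma> where "\<sigma> n = \<rho> n + D * s^n / (1 - s)" for n
  have id: "D * s^n + D * s^Suc n / (1 - s) = D * s^n / (1 - s)" for n
    using assms(4) by (simp add: field_simps)
  have "decseq \<sigma>"
  proof (rule decseq_SucI)
    fix n
    have "\<sigma> (Suc n) \<le> \<rho> n + D * s^n + D * s^Suc n / (1 - s)" unfolding \<sigma>_def using assms(2)[of n] by simp
    also have "\<dots> = \<sigma> n" unfolding \<sigma>_def using id[of n] by simp
    finally show "\<sigma> (Suc n) \<le> \<sigma> n" .
  qed
  moreover have "\<forall>i. 0 \<le> \<sigma> i" unfolding \<sigma>_def using assms by (simp add: add_nonneg_nonneg)
  ultimately obtain L where L: "\<sigma> \<longlonglongrightarrow> L" using decseq_convergent by blast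
  have z: "(\<lambda>n. D * s^n / (1 - s)) \<longlonglongrightarrow> D * 0 / (1 - s)"
    using assms by (intro tendsto_intros LIMSEQ_power_zero) auto
  have "(\<lambda>n. \<sigma> n - D * s^n / (1 - s)) \<longlonglongrightarrow> L - D * 0 / (1 - s)"
    by (intro tendsto_diff L z)
  then have "\<rho> \<longlonglongrightarrow> L" unfolding \<sigma>_def by simp
  then show ?thesis by blast
qed

locale rs =
  fixes N :: nat and S :: "nat \<Rightarrow> 'a::euclidean_space \<Rightarrow> 'a" and r :: "nat \<Rightarrow> real"
    and K :: "'a set" and \<gamma> \<alpha> lam :: real and \<kappa> :: "nat \<Rightarrow> 'a \<Rightarrow> nat list"
  assumes N: "N \<ge> 2"
    and rb: "\<forall>i\<in>{1..N}. 0 < r i \<and> r i < 1"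
    and lam0: "0 < lam" and lam1: "lam < rmin N r powr \<alpha>"
    and kappa: "kappa_seq N S r K \<kappa>"
begin

abbreviation "rr \<equiv> rmin N r"

lemma rr_props: "0 < rr" "rr < 1" "\<And>i. i \<in> {1..N} \<Longrightarrow> rr \<le> r i"
proof -
  have ne: "r ` {1..N} \<noteq> {}" using N by auto
  obtain i where i: "i \<in> {1..N}" "rr = r i" unfolding rmin_def
    using Min_in[OF _ ne] by auto
  show "0 < rr" "rr < 1" using i rb by auto
  show "\<And>i. i \<in> {1..N} \<Longrightarrow> rr \<le> r i" unfolding rmin_def by auto
qed

lemma wr_pos: "set w \<subseteq> {1..N} \<Longrightarrow> 0 < wr r w"
  unfolding wr_def using rb by (induction w) auto

lemma wr_snoc: "w \<noteq> [] \<Longrightarrow> wr r w = wr r (butlast w) * r (last w)"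
proof -
  assume "w \<noteq> []"
  then have "w = butlast w @ [last w]" by simp
  then have "wr r w = wr r (butlast w @ [last w])" by simp
  also have "\<dots> = wr r (butlast w) * r (last w)" unfolding wr_def by simp
  finally show ?thesis .
qed

lemma J_lower:
  assumes "w \<in> J N r k" "k \<ge> 1"
  shows "wr r w > rr ^ (Suc k)" "wr r w \<le> rr ^ k" "w \<noteq> []" "set w \<subseteq> {1..N}"
proof -
  have w: "w \<in> words N" "w \<noteq> []" "wr r w \<le> rr ^ k" "rr ^ k < wr r (butlast w)"
    using assms unfolding J_def by auto
  have sw: "set w \<subseteq> {1..N}" using w(1) unfolding words_def by auto
  have l: "last w \<in> {1..N}" using sw w(2) last_in_set by blast
  have "set (butlast w) \<subseteq> {1..N}" using sw by (meson in_set_butlastD subsetD subsetI)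
  then have p: "0 < wr r (butlast w)" by (rule wr_pos)
  have "rr ^ Suc k = rr ^ k * rr" by simp
  also have "\<dots> < wr r (butlast w) * r (last w)"
    using w(4) rr_props(3)[OF l] rr_props(1) p
    by (intro mult_less_le_imp_less) auto
  finally show "wr r w > rr ^ (Suc k)" using wr_snoc[OF w(2)] by simp
  show "wr r w \<le> rr ^ k" "w \<noteq> []" "set w \<subseteq> {1..N}" using w sw by auto
qed

lemma J_unique: assumes "w \<in> J N r k" "w \<in> J N r j" shows "k = j"
proof (rule ccontr)
  assume ne: "k \<noteq> j"
  have nz: "k \<noteq> 0 \<and> j \<noteq> 0"
  proof (rule ccontr)
    assume "\<not> (k \<noteq> 0 \<and> j \<noteq> 0)"
    then have "w = []" "k \<noteq> 0 \<or> j \<noteq> 0" using assms ne unfolding J_def by (auto split: if_splits)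
    then show False using assms unfolding J_def by (auto split: if_splits)
  qed
  have lt: "\<And>a b. a < b \<Longrightarrow> w \<in> J N r a \<Longrightarrow> w \<in> J N r b \<Longrightarrow> a \<noteq> 0 \<Longrightarrow> False"
  proof -
    fix a b assume ab: "a < b" "w \<in> J N r a" "w \<in> J N r b" "a \<noteq> 0"
    have "rr ^ b \<le> rr ^ Suc a" using ab(1) rr_props(1,2) by (intro power_decreasing) auto
    moreover have "wr r w > rr ^ Suc a" using J_lower(1)[OF ab(2)] ab(4) by simp
    moreover have "wr r w \<le> rr ^ b" using J_lower(2)[OF ab(3)] ab(1) by simp
    ultimately show False by simp
  qed
  show False using ne nz lt assms by (metis linorder_neqE_nat)
qed

lemma lvl_eq: "w \<in> J N r k \<Longrightarrow> lvl N r w = k"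
  unfolding lvl_def using J_unique by blast

lemma finite_J: "finite (J N r k)"
proof (cases "k = 0")
  case True then show ?thesis unfolding J_def by simp
next
  case False
  define rM where "rM = Max (r ` {1..N})"
  have ne: "r ` {1..N} \<noteq> {}" using N by auto
  have rM: "rM < 1" "\<And>i. i \<in> {1..N} \<Longrightarrow> r i \<le> rM"
    unfolding rM_def using Max_in[OF _ ne] rb by auto
  have rM0: "0 < rM" using rM(2)[of 1] rb N by force
  obtain L where L: "rM ^ L < rr ^ k" using real_arch_pow_inv[of "rr ^ k" rM] rM rr_props by auto
  have pb: "\<And>w. set w \<subseteq> {1..N} \<Longrightarrow> wr r w \<le> rM ^ length w"
  proof -
    fix w :: "nat list" show "set w \<subseteq> {1..N} \<Longrightarrow> wr r w \<le> rM ^ length w"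
    proof (induction w)
      case Nil then show ?case by (simp add: wr_def)
    next
      case (Cons a w)
      have "wr r (a # w) = r a * wr r w" by (simp add: wr_def)
      also have "\<dots> \<le> rM * rM ^ length w"
        using Cons rM rM0 rb wr_pos[of w] by (intro mult_mono) auto
      finally show ?case by simp
    qed
  qed
  have "J N r k \<subseteq> {xs. set xs \<subseteq> {1..N} \<and> length xs \<le> Suc L}"
  proof
    fix w assume w: "w \<in> J N r k"
    have a: "w \<in> words N" "rr ^ k < wr r (butlast w)" using w False unfolding J_def by auto
    have sw: "set w \<subseteq> {1..N}" using a(1) unfolding words_def by auto
    have "set (butlast w) \<subseteq> {1..N}" using sw by (meson in_set_butlastD subsetD subsetI)
    then have "wr r (butlast w) \<le> rM ^ length (butlast w)" by (rule pb)
    then have "rM ^ L < rM ^ length (butlast w)" using a L by simp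
    then have "length (butlast w) < L" using rM rM0 by (meson not_le power_decreasing less_imp_le)
    then show "w \<in> {xs. set xs \<subseteq> {1..N} \<and> length xs \<le> Suc L}" using sw by auto
  qed
  then show ?thesis using finite_subset finite_lists_length_le by blast
qed

lemma finite_X: "finite (X N r n)" unfolding X_def using finite_J by auto

lemma J_sub_X: "k \<le> n \<Longrightarrow> J N r k \<subseteq> X N r n" unfolding X_def by auto

lemma X_mono: "X N r n \<subseteq> X N r (Suc n)" unfolding X_def by (auto simp: le_Suc_eq)

abbreviation "c \<equiv> cond N S r K \<gamma> \<alpha> lam"
abbreviation "En \<equiv> energy N S r K \<gamma> \<alpha> lam"

lemma cond_nonneg: "0 \<le> c x y"
  unfolding cond_def using lam0 by auto

lemma energy_comb:
  assumes "0 \<le> a" "0 \<le> b" "\<And>x y. (g x - g y)^2 \<le> a * (f1 x - f1 y)^2 + b * (f2 x - f2 y)^2"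
  shows "En n g \<le> a * En n f1 + b * En n f2"
proof -
  have pt: "c x y * (g x - g y)^2 \<le> a * (c x y * (f1 x - f1 y)^2) + b * (c x y * (f2 x - f2 y)^2)" for x y
  proof -
    have "c x y * (g x - g y)^2 \<le> c x y * (a * (f1 x - f1 y)^2 + b * (f2 x - f2 y)^2)"
      using assms(3) cond_nonneg by (intro mult_left_mono) auto
    then show ?thesis by (simp add: algebra_simps)
  qed
  have "(\<Sum>x\<in>X N r n. \<Sum>y\<in>X N r n. c x y * (g x - g y)^2) \<le>
        (\<Sum>x\<in>X N r n. \<Sum>y\<in>X N r n. a * (c x y * (f1 x - f1 y)^2) + b * (c x y * (f2 x - f2 y)^2))"
    by (intro sum_mono pt)
  also have "\<dots> = a * (\<Sum>x\<in>X N r n. \<Sum>y\<in>X N r n. c x y * (f1 x - f1 y)^2) +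
                     b * (\<Sum>x\<in>X N r n. \<Sum>y\<in>X N r n. c x y * (f2 x - f2 y)^2)"
    by (simp add: sum.distrib sum_distrib_left)
  finally show ?thesis unfolding energy_def by (simp add: algebra_simps)
qed

lemma energy_nonneg: "0 \<le> En n f"
  unfolding energy_def using cond_nonneg by (intro mult_nonneg_nonneg sum_nonneg) auto

lemma energy_edge:
  assumes "x \<in> X N r n" "y \<in> X N r n"
  shows "1/2 * c x y * (f x - f y)^2 \<le> En n f"
proof -
  have nn: "\<And>x y. 0 \<le> c x y * (f x - f y)^2" using cond_nonneg by simp
  have "c x y * (f x - f y)^2 \<le> (\<Sum>y\<in>X N r n. c x y * (f x - f y)^2)"
    using assms finite_X nn by (intro member_le_sum) auto
  also have "\<dots> \<le> (\<Sum>x\<in>X N r n. \<Sum>y\<in>X N r n. c x y * (f x - f y)^2)"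
    using assms finite_X nn by (intro member_le_sum sum_nonneg) auto
  finally show ?thesis unfolding energy_def by simp
qed

lemma energy_mono_n: "En n f \<le> En (Suc n) f"
proof -
  have nn: "\<And>x y. 0 \<le> c x y * (f x - f y)^2" using cond_nonneg by simp
  have "(\<Sum>x\<in>X N r n. \<Sum>y\<in>X N r n. c x y * (f x - f y)^2)
     \<le> (\<Sum>x\<in>X N r n. \<Sum>y\<in>X N r (Suc n). c x y * (f x - f y)^2)"
    using finite_X X_mono nn by (intro sum_mono sum_mono2) auto
  also have "\<dots> \<le> (\<Sum>x\<in>X N r (Suc n). \<Sum>y\<in>X N r (Suc n). c x y * (f x - f y)^2)"
    using finite_X X_mono nn by (intro sum_mono2 sum_nonneg) auto
  finally show ?thesis unfolding energy_def by simp
qed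

lemma kap: "\<xi> \<in> K \<Longrightarrow> \<kappa> n \<xi> \<in> J N r n" "\<xi> \<in> K \<Longrightarrow> prefix (\<kappa> n \<xi>) (\<kappa> (Suc n) \<xi>)"
  using kappa unfolding kappa_seq_def by auto

lemma kap0: "\<xi> \<in> K \<Longrightarrow> \<kappa> 0 \<xi> = []"
  using kap(1)[of \<xi> 0] unfolding J_def by simp

lemma kapX: "\<xi> \<in> K \<Longrightarrow> j \<le> n \<Longrightarrow> \<kappa> j \<xi> \<in> X N r n"
  using kap(1) J_sub_X by blast

definition "p = rr powr \<alpha>"
definition "q = lam / p"
definition "m0 = min 1 p"

lemma pq: "0 < p" "0 < q" "q < 1" "0 < m0" "m0 \<le> 1" "m0 \<le> p"
  using rr_props lam0 lam1 unfolding p_def q_def m0_def by auto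

lemma powr_pow: "0 < (x::real) \<Longrightarrow> (x ^ n) powr a = (x powr a) ^ n"
proof -
  assume x: "0 < x"
  have "(x ^ n) powr a = (x powr real n) powr a" using powr_realpow[OF x] by simp
  also have "\<dots> = x powr (real n * a)" by (simp add: powr_powr)
  also have "\<dots> = (x powr a) ^ n" using powr_power[of x a n] x by simp
  finally show ?thesis .
qed

lemma cond_vert:
  assumes "\<xi> \<in> K"
  shows "m0 / q ^ Suc j \<le> c (\<kappa> (Suc j) \<xi>) (\<kappa> j \<xi>)"
proof -
  define w where "w = \<kappa> (Suc j) \<xi>"
  have wJ: "w \<in> J N r (Suc j)" using kap(1)[OF assms] w_def by simp
  have ve: "vert_edge N r w (\<kappa> j \<xi>)" unfolding vert_edge_def
    using wJ kap[OF assms] w_def by (intro exI[of _ "Suc j"]) auto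
  have cw: "c w (\<kappa> j \<xi>) = wr r w powr \<alpha> * inverse (lam ^ Suc j)"
    unfolding cond_def using ve lvl_eq[OF wJ] by simp
  have wl: "wr r w > rr ^ Suc (Suc j)" "wr r w \<le> rr ^ Suc j" using J_lower[OF wJ] by auto
  have rp: "0 < rr ^ Suc (Suc j)" "0 < rr ^ Suc j" using rr_props by auto
  have key: "p ^ Suc j * m0 \<le> wr r w powr \<alpha>"
  proof (cases "\<alpha> \<ge> 0")
    case True
    have "p ^ Suc j * m0 \<le> p ^ Suc j * p" using pq by (intro mult_left_mono) auto
    also have "\<dots> = (rr ^ Suc (Suc j)) powr \<alpha>" unfolding powr_pow[OF rr_props(1)] p_def by simp
    also have "\<dots> \<le> wr r w powr \<alpha>" using True wl rp by (intro powr_mono2) auto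
    finally show ?thesis .
  next
    case False
    have "p ^ Suc j * m0 \<le> p ^ Suc j" using pq by (simp add: mult_left_le)
    also have "\<dots> = (rr ^ Suc j) powr \<alpha>" unfolding powr_pow[OF rr_props(1)] p_def by simp
    also have "\<dots> \<le> wr r w powr \<alpha>" using False wl rp by (intro powr_mono2') auto
    finally show ?thesis .
  qed
  have "m0 / q ^ Suc j = p ^ Suc j * m0 * inverse (lam ^ Suc j)"
    using pq lam0 unfolding q_def by (simp add: power_divide field_simps)
  also have "\<dots> \<le> wr r w powr \<alpha> * inverse (lam ^ Suc j)"
    using key lam0 by (intro mult_right_mono) auto
  finally show ?thesis using cw w_def by simp
qed


definition Cap :: "nat \<Rightarrow> nat list set \<Rightarrow> nat list set \<Rightarrow> real" where
  "Cap n A B = Inf {En n f | f. (\<forall>x\<in>A. f x = 1) \<and> (\<forall>x\<in>B. f x = 0)}"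

lemma eff_res_eq: "eff_res N S r K \<gamma> \<alpha> lam n A B = (if A \<inter> B \<noteq> {} then 0 else inverse (Cap n A B))"
  unfolding eff_res_def Cap_def by simp

lemma Cap_le:
  assumes "\<forall>x\<in>A. f x = 1" "\<forall>x\<in>B. f x = 0"
  shows "Cap n A B \<le> En n f"
proof -
  have "En n f \<in> {En n f | f. (\<forall>x\<in>A. f x = 1) \<and> (\<forall>x\<in>B. f x = 0)}" using assms by blast
  moreover have "bdd_below {En n f | f. (\<forall>x\<in>A. f x = 1) \<and> (\<forall>x\<in>B. f x = 0)}"
    by (rule bdd_belowI[of _ 0]) (use energy_nonneg in blast)
  ultimately show ?thesis unfolding Cap_def by (rule cInf_lower)
qed

lemma feas_ne:
  assumes d: "A \<inter> B = {}"
  shows "{En n f | f. (\<forall>x\<in>A. f x = 1) \<and> (\<forall>x\<in>B. f x = 0)} \<noteq> {}"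
proof -
  define g where "g = (\<lambda>x. if x \<in> A then 1 else (0::real))"
  have g: "(\<forall>x\<in>A. g x = 1) \<and> (\<forall>x\<in>B. g x = 0)" using d unfolding g_def by auto
  have "En n g \<in> {En n f | f. (\<forall>x\<in>A. f x = 1) \<and> (\<forall>x\<in>B. f x = 0)}"
    by (rule CollectI, rule exI[of _ g]) (use g in simp)
  then show ?thesis by (metis empty_iff)
qed

lemma Cap_ge:
  assumes d: "A \<inter> B = {}"
    and h: "\<And>f. (\<forall>x\<in>A. f x = 1) \<Longrightarrow> (\<forall>x\<in>B. f x = 0) \<Longrightarrow> T \<le> En n f"
  shows "T \<le> Cap n A B"
  unfolding Cap_def
proof (rule cInf_greatest[OF feas_ne[OF d]])
  fix y assume "y \<in> {En n f | f. (\<forall>x\<in>A. f x = 1) \<and> (\<forall>x\<in>B. f x = 0)}"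
  then obtain f where "y = En n f" "\<forall>x\<in>A. f x = 1" "\<forall>x\<in>B. f x = 0" by blast
  then show "T \<le> y" using h by simp
qed

lemma Cap_nonneg: "A \<inter> B = {} \<Longrightarrow> 0 \<le> Cap n A B"
  by (rule Cap_ge) (assumption, rule energy_nonneg)

lemma Cap_empty: "Cap n A {} \<le> 0"
proof -
  have "Cap n A {} \<le> En n (\<lambda>_. 1)" by (rule Cap_le) simp_all
  also have "En n (\<lambda>_. 1) \<le> 0 * En n (\<lambda>_. 1) + 0 * En n (\<lambda>_. 1)" by (rule energy_comb) simp_all
  finally show ?thesis by simp
qed

lemma Cap_approx:
  assumes "A \<inter> B = {}" "0 < e"
  obtains f where "\<forall>x\<in>A. f x = 1" "\<forall>x\<in>B. f x = 0" "En n f < Cap n A B + e"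
proof -
  have "Inf {En n f | f. (\<forall>x\<in>A. f x = 1) \<and> (\<forall>x\<in>B. f x = 0)} < Cap n A B + e"
    using assms unfolding Cap_def by simp
  from cInf_lessD[OF feas_ne[OF assms(1)] this] show ?thesis using that by blast
qed

lemma sq_minmax: "(max 0 (min a b) - max 0 (min c d))^2 \<le> (a - c)^2 + (b - d)^2" for a b c d :: real
proof -
  have h: "\<bar>max 0 (min a b) - max 0 (min c d)\<bar> \<le> max \<bar>a - c\<bar> \<bar>b - d\<bar>"
    by (smt (verit))
  have "(max 0 (min a b) - max 0 (min c d))^2 = \<bar>max 0 (min a b) - max 0 (min c d)\<bar>^2" by simp
  also have "\<dots> \<le> (max \<bar>a - c\<bar> \<bar>b - d\<bar>)^2" using h by (intro power_mono) auto
  also have "\<dots> \<le> (a - c)^2 + (b - d)^2" by (cases "\<bar>a - c\<bar> \<le> \<bar>b - d\<bar>") (simp_all add: max_def)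
  finally show ?thesis .
qed

lemma Cap_union:
  assumes "A \<inter> B1 = {}" "A \<inter> B2 = {}"
  shows "Cap n A (B1 \<union> B2) \<le> Cap n A B1 + Cap n A B2"
proof (rule field_le_epsilon)
  fix e :: real assume e: "0 < e"
  obtain f1 where f1: "\<forall>x\<in>A. f1 x = 1" "\<forall>x\<in>B1. f1 x = 0" "En n f1 < Cap n A B1 + e/2"
    using Cap_approx[OF assms(1), of "e/2"] e by auto
  obtain f2 where f2: "\<forall>x\<in>A. f2 x = 1" "\<forall>x\<in>B2. f2 x = 0" "En n f2 < Cap n A B2 + e/2"
    using Cap_approx[OF assms(2), of "e/2"] e by auto
  define g where "g x = max 0 (min (f1 x) (f2 x))" for x
  have "Cap n A (B1 \<union> B2) \<le> En n g"
    by (rule Cap_le) (use f1 f2 in \<open>auto simp: g_def\<close>)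
  also have "En n g \<le> 1 * En n f1 + 1 * En n f2"
    by (rule energy_comb) (simp_all add: g_def sq_minmax)
  finally show "Cap n A (B1 \<union> B2) \<le> Cap n A B1 + Cap n A B2 + e" using f1 f2 by simp
qed

lemma Cap_UN:
  assumes "finite F" "\<forall>\<eta>\<in>F. A \<inter> B \<eta> = {}"
  shows "Cap n A (\<Union>\<eta>\<in>F. B \<eta>) \<le> (\<Sum>\<eta>\<in>F. Cap n A (B \<eta>))"
  using assms
proof (induction F rule: finite_induct)
  case empty then show ?case using Cap_empty by simp
next
  case (insert x F)
  have "Cap n A (\<Union>\<eta>\<in>insert x F. B \<eta>) = Cap n A (B x \<union> (\<Union>\<eta>\<in>F. B \<eta>))" by simp
  also have "\<dots> \<le> Cap n A (B x) + Cap n A (\<Union>\<eta>\<in>F. B \<eta>)"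
    using insert.prems by (intro Cap_union) auto
  also have "\<dots> \<le> Cap n A (B x) + (\<Sum>\<eta>\<in>F. Cap n A (B \<eta>))"
    using insert by simp
  finally show ?case using insert by simp
qed


lemma vert_bound:
  assumes "\<xi> \<in> K" "Suc j \<le> n"
  shows "(m0 / q ^ Suc j) * (f (\<kappa> (Suc j) \<xi>) - f (\<kappa> j \<xi>))^2 \<le> 2 * En n f"
proof -
  have "(m0 / q ^ Suc j) * (f (\<kappa> (Suc j) \<xi>) - f (\<kappa> j \<xi>))^2
      \<le> c (\<kappa> (Suc j) \<xi>) (\<kappa> j \<xi>) * (f (\<kappa> (Suc j) \<xi>) - f (\<kappa> j \<xi>))^2"
    using cond_vert[OF assms(1)] by (intro mult_right_mono) auto
  also have "\<dots> \<le> 2 * En n f"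
    using energy_edge[OF kapX[OF assms(1) assms(2)] kapX[OF assms(1)], of j f] assms(2) by simp
  finally show ?thesis .
qed

lemma m0_le: "m0 \<le> m0 / q ^ k"
proof -
  have "q ^ k \<le> 1" using pq by (simp add: power_le_one)
  moreover have "0 < q ^ k" using pq by simp
  ultimately have "m0 / 1 \<le> m0 / q ^ k" using pq by (intro divide_left_mono) auto
  then show ?thesis by simp
qed

lemma telescope: "\<bar>g n - g 0\<bar> \<le> (\<Sum>j<n. \<bar>g (Suc j) - g j\<bar>)" for g :: "nat \<Rightarrow> real"
  by (induction n) auto

lemma sq_le_sqrt: "0 \<le> b \<Longrightarrow> x^2 \<le> b \<Longrightarrow> \<bar>x\<bar> \<le> sqrt b" for x b :: real
  using real_sqrt_le_mono[of "x^2" b] by simp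

lemma connect:
  assumes "\<Phi> \<subseteq> K" "\<Psi> \<subseteq> K" "\<Phi> \<noteq> {}" "\<Psi> \<noteq> {}" "\<kappa> n ` \<Phi> \<inter> \<kappa> n ` \<Psi> = {}"
  shows "0 < Cap n (\<kappa> n ` \<Phi>) (\<kappa> n ` \<Psi>)"
proof -
  obtain \<xi> \<eta> where xe: "\<xi> \<in> \<Phi>" "\<eta> \<in> \<Psi>" using assms by auto
  have K: "\<xi> \<in> K" "\<eta> \<in> K" using xe assms by auto
  have n: "n \<noteq> 0"
  proof
    assume "n = 0"
    then have "\<kappa> n \<xi> = \<kappa> n \<eta>" using kap0 K by simp
    then show False using assms(5) xe by blast
  qed
  have "m0 / (8 * real n ^ 2) \<le> Cap n (\<kappa> n ` \<Phi>) (\<kappa> n ` \<Psi>)"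
  proof (rule Cap_ge[OF assms(5)])
    fix f assume f1: "\<forall>x\<in>\<kappa> n ` \<Phi>. f x = (1::real)" and f0: "\<forall>x\<in>\<kappa> n ` \<Psi>. f x = 0"
    define s where "s = sqrt (2 * En n f / m0)"
    have step: "\<bar>f (\<kappa> (Suc j) \<zeta>) - f (\<kappa> j \<zeta>)\<bar> \<le> s" if "\<zeta> \<in> K" "j < n" for \<zeta> j
    proof -
      have "m0 * (f (\<kappa> (Suc j) \<zeta>) - f (\<kappa> j \<zeta>))^2 \<le> (m0 / q ^ Suc j) * (f (\<kappa> (Suc j) \<zeta>) - f (\<kappa> j \<zeta>))^2"
        by (rule mult_right_mono[OF m0_le]) simp
      also have "\<dots> \<le> 2 * En n f" using vert_bound that by auto
      finally have "(f (\<kappa> (Suc j) \<zeta>) - f (\<kappa> j \<zeta>))^2 \<le> 2 * En n f / m0"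
        using pq by (simp add: le_divide_eq mult.commute)
      then show ?thesis unfolding s_def using energy_nonneg pq by (intro sq_le_sqrt) auto
    qed
    have ch: "\<bar>f (\<kappa> n \<zeta>) - f (\<kappa> 0 \<zeta>)\<bar> \<le> n * s" if "\<zeta> \<in> K" for \<zeta>
    proof -
      have "\<bar>f (\<kappa> n \<zeta>) - f (\<kappa> 0 \<zeta>)\<bar> \<le> (\<Sum>j<n. \<bar>f (\<kappa> (Suc j) \<zeta>) - f (\<kappa> j \<zeta>)\<bar>)"
        using telescope[of "\<lambda>j. f (\<kappa> j \<zeta>)" n] by simp
      also have "\<dots> \<le> (\<Sum>j<n. s)" using step[OF that] by (intro sum_mono) auto
      finally show ?thesis by simp
    qed
    have "1 = \<bar>(f (\<kappa> n \<xi>) - f (\<kappa> 0 \<xi>)) - (f (\<kappa> n \<eta>) - f (\<kappa> 0 \<eta>))\<bar>"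
      using f1 f0 xe kap0 K by auto
    also have "\<dots> \<le> n * s + n * s" using ch K by (smt (verit))
    finally have 1: "1 \<le> 2 * n * s" by (simp add: algebra_simps)
    have s0: "0 \<le> s" unfolding s_def using energy_nonneg[of n f] pq by simp
    have "1 \<le> (2 * n * s)^2" using 1 by (smt (verit) one_le_power)
    also have "\<dots> = 4 * n^2 * (2 * En n f / m0)"
      unfolding s_def using energy_nonneg pq by (simp add: power_mult_distrib)
    finally have "1 \<le> 8 * n^2 * En n f / m0" by simp
    then show "m0 / (8 * real n ^ 2) \<le> En n f" using pq n by (simp add: field_simps)
  qed
  moreover have "0 < m0 / (8 * real n ^ 2)" using pq n by simp
  ultimately show ?thesis by linarith
qed


abbreviation "Rs \<equiv> eff_res N S r K \<gamma> \<alpha> lam"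

lemma R_nonneg: "0 \<le> Rs n A B"
  unfolding eff_res_eq using Cap_nonneg by auto

lemma clip_sq: "(max 0 (min 1 a) - max 0 (min 1 b))^2 \<le> (a - b)^2" for a b :: real
proof -
  have "\<bar>max 0 (min 1 a) - max 0 (min 1 b)\<bar> \<le> \<bar>a - b\<bar>" by (smt (verit))
  then have "\<bar>max 0 (min 1 a) - max 0 (min 1 b)\<bar>^2 \<le> \<bar>a - b\<bar>^2" by (intro power_mono) auto
  then show ?thesis by simp
qed

lemma shift:
  assumes PK: "\<Phi> \<subseteq> K" "\<Psi> \<subseteq> K" and ne: "\<Phi> \<noteq> {}" "\<Psi> \<noteq> {}"
  shows "sqrt (Rs (Suc n) (\<kappa> (Suc n) ` \<Phi>) (\<kappa> (Suc n) ` \<Psi>))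
           \<le> sqrt (Rs n (\<kappa> n ` \<Phi>) (\<kappa> n ` \<Psi>)) + sqrt (8 / m0 * q ^ Suc n)"
    (is "sqrt ?R' \<le> sqrt ?R + ?d")
proof -
  define A where "A = \<kappa> n ` \<Phi>"
  define B where "B = \<kappa> n ` \<Psi>"
  define A' where "A' = \<kappa> (Suc n) ` \<Phi>"
  define B' where "B' = \<kappa> (Suc n) ` \<Psi>"
  define \<rho> where "\<rho> = sqrt ?R"
  define cc where "cc = m0 / q ^ Suc n"
  define \<beta> where "\<beta> = sqrt (2 / cc)"
  have cc0: "0 < cc" unfolding cc_def using pq by simp
  have \<rho>0: "0 \<le> \<rho>" unfolding \<rho>_def using R_nonneg by simp
  have d\<beta>: "?d = 2 * \<beta>"
  proof -
    have "8 / m0 * q ^ Suc n = 4 * (2 / cc)" unfolding cc_def using pq by (simp add: field_simps)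
    then have "?d = sqrt (4 * (2 / cc))" by simp
    also have "\<dots> = sqrt 4 * sqrt (2 / cc)" by (rule real_sqrt_mult)
    also have "sqrt (4::real) = 2" by (rule real_sqrt_unique) auto
    finally show ?thesis unfolding \<beta>_def by simp
  qed
  have \<beta>0: "0 < \<beta>" unfolding \<beta>_def using cc0 by simp
  show ?thesis
  proof (cases "A' \<inter> B' = {} \<and> Cap (Suc n) A' B' \<noteq> 0")
    case False
    then have "?R' = 0" unfolding eff_res_eq A'_def B'_def by auto
    then show ?thesis using \<rho>0 d\<beta> \<beta>0 unfolding \<rho>_def by simp
  next
    case True
    then have disj': "A' \<inter> B' = {}" and C'0: "Cap (Suc n) A' B' \<noteq> 0" by auto
    have C'pos: "0 < Cap (Suc n) A' B'" using Cap_nonneg[OF disj', of "Suc n"] C'0 by simp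
    have key: "1 / (\<rho> + ?d)^2 \<le> Cap (Suc n) A' B'"
    proof (rule Cap_ge[OF disj'])
      fix f assume f1: "\<forall>x\<in>A'. f x = (1::real)" and f0: "\<forall>x\<in>B'. f x = 0"
      define h where "h x = max 0 (min 1 (f x))" for x
      have hf: "En (Suc n) h \<le> 1 * En (Suc n) f + 0 * En (Suc n) f"
        by (rule energy_comb) (simp_all add: h_def clip_sq)
      define e where "e = En (Suc n) h"
      define s where "s = sqrt e"
      have e0: "0 \<le> e" unfolding e_def by (rule energy_nonneg)
      have s0: "0 \<le> s" unfolding s_def using e0 by simp
      have ss: "s^2 = e" unfolding s_def using e0 by simp
      have edge: "\<bar>h (\<kappa> (Suc n) \<zeta>) - h (\<kappa> n \<zeta>)\<bar> \<le> s * \<beta>" if "\<zeta> \<in> K" for \<zeta>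
      proof -
        have "cc * (h (\<kappa> (Suc n) \<zeta>) - h (\<kappa> n \<zeta>))^2 \<le> 2 * e"
          unfolding cc_def e_def using vert_bound[OF that, of n "Suc n" h] by simp
        then have "(h (\<kappa> (Suc n) \<zeta>) - h (\<kappa> n \<zeta>))^2 \<le> 2 * e / cc"
          using cc0 by (simp add: le_divide_eq mult.commute)
        then have "\<bar>h (\<kappa> (Suc n) \<zeta>) - h (\<kappa> n \<zeta>)\<bar> \<le> sqrt (2 * e / cc)"
          using e0 cc0 by (intro sq_le_sqrt) auto
        also have "sqrt (2 * e / cc) = s * \<beta>" unfolding s_def \<beta>_def
          by (simp add: real_sqrt_mult[symmetric])
        finally show ?thesis .
      qed
      have hA: "1 - h a \<le> s * \<beta>" if aA: "a \<in> A" for a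
      proof -
        obtain \<zeta> where z: "\<zeta> \<in> \<Phi>" "a = \<kappa> n \<zeta>" using aA A_def by auto
        have "h (\<kappa> (Suc n) \<zeta>) = 1" using f1 z A'_def h_def by auto
        then show ?thesis using edge[of \<zeta>] z PK by auto
      qed
      have hB: "h b \<le> s * \<beta>" if bB: "b \<in> B" for b
      proof -
        obtain \<zeta> where z: "\<zeta> \<in> \<Psi>" "b = \<kappa> n \<zeta>" using bB B_def by auto
        have "h (\<kappa> (Suc n) \<zeta>) = 0" using f0 z B'_def h_def by auto
        then show ?thesis using edge[of \<zeta>] z PK by auto
      qed
      have main: "1 \<le> s * (\<rho> + ?d)"
      proof (cases "1 \<le> 2 * (s * \<beta>)")
        case True
        then show ?thesis using d\<beta> s0 \<rho>0 \<beta>0 by (simp add: algebra_simps) (smt (verit) mult_nonneg_nonneg)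
      next
        case False
        define t where "t = 1 - 2 * (s * \<beta>)"
        have t0: "0 < t" using False t_def by simp
        have disj: "A \<inter> B = {}"
        proof (rule ccontr)
          assume "A \<inter> B \<noteq> {}"
          then obtain a where "a \<in> A" "a \<in> B" by auto
          then show False using hA hB False by fastforce
        qed
        define g where "g x = max 0 (min 1 ((h x - s * \<beta>) / t))" for x
        have "Cap n A B \<le> En n g"
        proof (rule Cap_le)
          show "\<forall>x\<in>A. g x = 1"
          proof
            fix x assume "x \<in> A"
            then have "1 - h x \<le> s * \<beta>" by (rule hA)
            then have "t \<le> h x - s * \<beta>" unfolding t_def by linarith
            then have "1 \<le> (h x - s * \<beta>) / t" using t0 by (simp add: le_divide_eq)
            then show "g x = 1" unfolding g_def by simp
          qed
          show "\<forall>x\<in>B. g x = 0"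
          proof
            fix x assume "x \<in> B"
            then have "h x - s * \<beta> \<le> 0" using hB by simp
            then have "(h x - s * \<beta>) / t \<le> 0" using t0 by (simp add: divide_nonpos_pos)
            then show "g x = 0" unfolding g_def by simp
          qed
        qed
        also have "En n g \<le> (1/t)^2 * En n h + 0 * En n h"
        proof (rule energy_comb)
          fix x y
          have "(g x - g y)^2 \<le> ((h x - s * \<beta>) / t - (h y - s * \<beta>) / t)^2"
            unfolding g_def by (rule clip_sq)
          also have "\<dots> = ((h x - h y) / t)^2" by (simp add: diff_divide_distrib[symmetric])
          also have "\<dots> = (1/t)^2 * (h x - h y)^2" by (simp add: power_divide)
          finally show "(g x - g y)^2 \<le> (1/t)^2 * (h x - h y)^2 + 0 * (h x - h y)^2" by simp
        qed auto
        also have "\<dots> \<le> (1/t)^2 * e" unfolding e_def using energy_mono_n[of n h] by (simp add: mult_left_mono)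
        finally have Cle: "Cap n A B \<le> (1/t)^2 * e" .
        have Cpos: "0 < Cap n A B" unfolding A_def B_def using connect PK ne disj A_def B_def by auto
        have R: "?R = inverse (Cap n A B)" unfolding eff_res_eq A_def B_def using disj A_def B_def by auto
        have "sqrt (Cap n A B) \<le> sqrt ((1/t)^2 * e)" using Cle by simp
        also have "\<dots> = s / t" unfolding s_def using t0 by (simp add: real_sqrt_mult)
        finally have "t * sqrt (Cap n A B) \<le> s" using t0 by (simp add: field_simps)
        then have "t * sqrt (Cap n A B) * \<rho> \<le> s * \<rho>" using \<rho>0 by (simp add: mult_right_mono)
        moreover have "sqrt (Cap n A B) * \<rho> = 1" unfolding \<rho>_def R using Cpos
          by (simp add: real_sqrt_inverse)
        ultimately have "t \<le> s * \<rho>" by (simp add: mult.assoc)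
        then show ?thesis unfolding t_def using d\<beta> by (simp add: algebra_simps)
      qed
      have pos: "0 < \<rho> + ?d" using \<rho>0 d\<beta> \<beta>0 by simp
      have "1 \<le> (s * (\<rho> + ?d))^2" using main by (smt (verit) one_le_power)
      then have "1 / (\<rho> + ?d)^2 \<le> s^2" using pos by (simp add: power_mult_distrib divide_le_eq)
      then show "1 / (\<rho> + ?d)^2 \<le> En (Suc n) f" using ss hf e_def by simp
    qed
    have pos: "0 < \<rho> + ?d" using \<rho>0 d\<beta> \<beta>0 by simp
    have "?R' = inverse (Cap (Suc n) A' B')" unfolding eff_res_eq A'_def B'_def using disj' A'_def B'_def by auto
    also have "\<dots> \<le> inverse (1 / (\<rho> + ?d)^2)" using key pos by (intro le_imp_inverse_le) auto
    also have "\<dots> = (\<rho> + ?d)^2" by simp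
    finally have "?R' \<le> (\<rho> + ?d)^2" .
    then have "sqrt ?R' \<le> sqrt ((\<rho> + ?d)^2)" by (rule real_sqrt_le_mono)
    also have "\<dots> = \<rho> + ?d" using pos by simp
    finally show ?thesis unfolding \<rho>_def .
  qed
qed


lemma R_conv:
  assumes PK: "\<Phi> \<subseteq> K" "\<Psi> \<subseteq> K" and ne: "\<Phi> \<noteq> {}" "\<Psi> \<noteq> {}"
  shows "\<exists>L. (\<lambda>n. Rs n (\<kappa> n ` \<Phi>) (\<kappa> n ` \<Psi>)) \<longlonglongrightarrow> L"
proof -
  define R where "R n = Rs n (\<kappa> n ` \<Phi>) (\<kappa> n ` \<Psi>)" for n
  define D where "D = sqrt (8 / m0 * q)"
  have st: "sqrt (R (Suc n)) \<le> sqrt (R n) + D * sqrt q ^ n" for n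
  proof -
    have "8 / m0 * q ^ Suc n = (8 / m0 * q) * q ^ n" by simp
    then have "sqrt (8 / m0 * q ^ Suc n) = sqrt (8 / m0 * q) * sqrt (q ^ n)"
      by (metis real_sqrt_mult)
    then have "sqrt (8 / m0 * q ^ Suc n) = D * sqrt q ^ n"
      unfolding D_def by (simp add: real_sqrt_power)
    then show ?thesis using shift[OF assms, of n] unfolding R_def by simp
  qed
  obtain l where l: "(\<lambda>n. sqrt (R n)) \<longlonglongrightarrow> l"
    using conv_aux[of "\<lambda>n. sqrt (R n)" D "sqrt q"] st pq R_nonneg unfolding D_def R_def by auto
  have "(\<lambda>n. (sqrt (R n))^2) \<longlonglongrightarrow> l^2" by (intro tendsto_intros l)
  moreover have "(sqrt (R n))^2 = R n" for n unfolding R_def using R_nonneg by simp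
  ultimately have "R \<longlonglongrightarrow> l^2" by simp
  then show ?thesis unfolding R_def by blast
qed

lemma lim_res_eq:
  assumes "(\<lambda>n. Rs n (\<kappa> n ` \<Phi>) (\<kappa> n ` \<Psi>)) \<longlonglongrightarrow> L"
  shows "lim_res N S r K \<gamma> \<alpha> lam \<kappa> \<Phi> \<Psi> = ereal L"
  unfolding lim_res_def by (rule limI) (rule tendsto_ereal[OF assms])


lemma final:
  assumes E: "finite E" "E \<subseteq> K" "card E \<ge> 2"
    and pos: "\<forall>\<xi>\<in>E. \<forall>\<eta>\<in>E. \<xi> \<noteq> \<eta> \<longrightarrow> lim_res N S r K \<gamma> \<alpha> lam \<kappa> {\<xi>} {\<eta>} > 0"
  shows "\<forall>\<xi>\<in>E. lim_res N S r K \<gamma> \<alpha> lam \<kappa> {\<xi>} (E - {\<xi>}) > 0"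
proof
  fix \<xi> assume xi: "\<xi> \<in> E"
  define F where "F = E - {\<xi>}"
  have finF: "finite F" using E F_def by simp
  have cF: "card F = card E - 1" using xi E F_def by simp
  then have cF1: "card F \<ge> 1" using E by simp
  then have Fne: "F \<noteq> {}" by auto
  have FK: "F \<subseteq> K" using E F_def by auto
  have xK: "{\<xi>} \<subseteq> K" using xi E by auto
  define P where "P \<eta> n = Rs n (\<kappa> n ` {\<xi>}) (\<kappa> n ` {\<eta>})" for \<eta> n
  define Lf where "Lf \<eta> = lim (P \<eta>)" for \<eta>
  have conv: "P \<eta> \<longlonglongrightarrow> Lf \<eta>" if "\<eta> \<in> F" for \<eta>
  proof -
    have "\<exists>L. P \<eta> \<longlonglongrightarrow> L" unfolding P_def using R_conv[OF xK, of "{\<eta>}"] that FK by auto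
    then show ?thesis unfolding Lf_def using convergent_LIMSEQ_iff convergent_def by blast
  qed
  have Lpos: "0 < Lf \<eta>" if "\<eta> \<in> F" for \<eta>
  proof -
    have "lim_res N S r K \<gamma> \<alpha> lam \<kappa> {\<xi>} {\<eta>} = ereal (Lf \<eta>)"
      by (rule lim_res_eq) (use conv[OF that] in \<open>simp add: P_def[abs_def]\<close>)
    moreover have "lim_res N S r K \<gamma> \<alpha> lam \<kappa> {\<xi>} {\<eta>} > 0" using pos xi that F_def by auto
    ultimately show ?thesis by simp
  qed
  define l where "l = Min (Lf ` F)"
  have l0: "0 < l" unfolding l_def using finF Fne Lpos by simp
  have lle: "l \<le> Lf \<eta>" if "\<eta> \<in> F" for \<eta> unfolding l_def using finF that by simp
  have ev: "eventually (\<lambda>n. \<forall>\<eta>\<in>F. l / 2 < P \<eta> n) sequentially"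
  proof (rule eventually_ball_finite[OF finF], rule ballI)
    fix \<eta> assume "\<eta> \<in> F"
    then show "eventually (\<lambda>n. l / 2 < P \<eta> n) sequentially"
    proof -
      assume e: "\<eta> \<in> F"
      have "l / 2 < Lf \<eta>" using lle[OF e] l0 by linarith
      then show ?thesis by (rule order_tendstoD(1)[OF conv[OF e]])
    qed
  qed
  define m where "m = real (card F)"
  have m1: "1 \<le> m" unfolding m_def using cF1 by simp
  define Q where "Q n = Rs n (\<kappa> n ` {\<xi>}) (\<kappa> n ` F)" for n
  have evQ: "eventually (\<lambda>n. l / (2 * m) \<le> Q n) sequentially"
    using ev
  proof (rule eventually_mono)
    fix n assume h: "\<forall>\<eta>\<in>F. l / 2 < P \<eta> n"
    define A where "A = \<kappa> n ` {\<xi>}"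
    have each: "A \<inter> \<kappa> n ` {\<eta>} = {} \<and> Cap n A (\<kappa> n ` {\<eta>}) \<le> 2 / l" if "\<eta> \<in> F" for \<eta>
    proof -
      have Pp: "l / 2 < P \<eta> n" using h that by auto
      then have Pg: "0 < P \<eta> n" using l0 by simp
      then have d: "A \<inter> \<kappa> n ` {\<eta>} = {}" unfolding P_def A_def eff_res_eq by (auto split: if_splits)
      then have Pe: "P \<eta> n = inverse (Cap n A (\<kappa> n ` {\<eta>}))" unfolding P_def A_def eff_res_eq by auto
      have Cp: "0 < Cap n A (\<kappa> n ` {\<eta>})" using Pg Pe Cap_nonneg[OF d, of n]
        by (metis inverse_nonpositive_iff_nonpositive linorder_not_le)
      have "Cap n A (\<kappa> n ` {\<eta>}) = inverse (P \<eta> n)" using Pe by simp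
      also have "\<dots> \<le> inverse (l / 2)" using Pp l0 by (intro le_imp_inverse_le) auto
      finally show ?thesis using d by simp
    qed
    have U: "\<kappa> n ` F = (\<Union>\<eta>\<in>F. \<kappa> n ` {\<eta>})" by auto
    have dF: "A \<inter> \<kappa> n ` F = {}" using each U by auto
    have "Cap n A (\<kappa> n ` F) \<le> (\<Sum>\<eta>\<in>F. Cap n A (\<kappa> n ` {\<eta>}))"
      unfolding U using each finF by (intro Cap_UN) auto
    also have "\<dots> \<le> (\<Sum>\<eta>\<in>F. 2 / l)" using each by (intro sum_mono) auto
    also have "\<dots> = 2 * m / l" unfolding m_def by simp
    finally have Cle: "Cap n A (\<kappa> n ` F) \<le> 2 * m / l" .
    have Cp: "0 < Cap n A (\<kappa> n ` F)" unfolding A_def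
      using connect[OF xK FK _ Fne] dF A_def by auto
    have "Q n = inverse (Cap n A (\<kappa> n ` F))" unfolding Q_def eff_res_eq using dF A_def by auto
    moreover have "inverse (2 * m / l) \<le> inverse (Cap n A (\<kappa> n ` F))"
      using Cle Cp by (intro le_imp_inverse_le) auto
    ultimately show "l / (2 * m) \<le> Q n" by simp
  qed
  obtain Ls where Ls: "Q \<longlonglongrightarrow> Ls" unfolding Q_def using R_conv[OF xK FK _ Fne] by auto
  have "l / (2 * m) \<le> Ls"
    using evQ Ls by (intro LIMSEQ_le_const[OF Ls]) (simp add: eventually_sequentially)
  moreover have "0 < l / (2 * m)" using l0 m1 by simp
  ultimately have "0 < Ls" by linarith
  moreover have "lim_res N S r K \<gamma> \<alpha> lam \<kappa> {\<xi>} (E - {\<xi>}) = ereal Ls"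
    by (rule lim_res_eq) (use Ls in \<open>simp add: Q_def[abs_def] F_def\<close>)
  ultimately show "lim_res N S r K \<gamma> \<alpha> lam \<kappa> {\<xi>} (E - {\<xi>}) > 0" by simp
qed

end

theorem lemma4p8:
  fixes N :: nat and S :: "nat \<Rightarrow> 'a::euclidean_space \<Rightarrow> 'a" and r :: "nat \<Rightarrow> real"
    and K :: "'a set" and \<gamma> \<alpha> lam :: real and \<kappa> :: "nat \<Rightarrow> 'a \<Rightarrow> nat list"
    and E :: "'a set"
  assumes N: "N \<ge> 2"
    and sim: "\<forall>i\<in>{1..N}. 0 < r i \<and> r i < 1 \<and> similitude (S i) (r i)"
    and osc: "open_set_condition N S"
    and K: "self_similar_set N S K"
    and alpha: "\<alpha> = hausdorff_dim K"
    and gamma: "\<gamma> > 0"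
    and kappa: "kappa_seq N S r K \<kappa>"
    and lam: "0 < lam" "lam < rmin N r powr \<alpha>"
    and E: "finite E" "E \<subseteq> K" "card E \<ge> 2"
    and pos: "\<forall>\<xi>\<in>E. \<forall>\<eta>\<in>E. \<xi> \<noteq> \<eta> \<longrightarrow> lim_res N S r K \<gamma> \<alpha> lam \<kappa> {\<xi>} {\<eta>} > 0"
  shows "\<forall>\<xi>\<in>E. lim_res N S r K \<gamma> \<alpha> lam \<kappa> {\<xi>} (E - {\<xi>}) > 0"
proof -
  interpret rs N S r K \<gamma> \<alpha> lam \<kappa>
    using N sim lam kappa by unfold_locales auto
  show ?thesis by (rule final[OF E pos])
qed

end
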